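(* Let $N$ be a positive integer and let $A=(a_{j-k})_{j,k=0}^N$ be an $(N+1)\times(N+1)$ complex self-adjoint Toeplitz matrix (so $a_{-n}=\overline{a_n}$). Let $\mathcal{G}_A$ be the set of functions $f\in L^\infty(\mathbb{T})$ with $\hat f(n)=a_n$ for $n=-N,\dots,N$, and let $c_A=\min\{\|f\|_\infty : f\in\mathcal{G}_A\}$. Then there is a unique function in $\mathcal{G}_A$ of minimum $L^\infty$-norm, and it is an alternating step function of height $c_A$ and order at most $N$ (in the order $0$ case: a constant function whose absolute value is $c_A$).
   Context: $\mathbb{T}$ is the unit circle with normalized Lebesgue measure; $\hat f(n)=\frac{1}{2\pi}\int_0^{2\pi} f(e^{i\theta})e^{-in\theta}\,d\theta$. The minimum defining $c_A$ is attained. For $c>0$ and $n$ a positive integer, an alternating step function of height $c$ and order $n$ is a function in $L^\infty(\mathbb{T})$ that assumes (a.e.) alternately the values $c$ and $-c$ on $2n$ (nondegenerate) subarcs forming a partition of $\mathbb{T}$. An alternating step function of order $0$ is a constant function, and its height is defined to be that constant. *)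

theory Defs
  imports "HOL-Analysis.Analysis" "HOL-Probability.Essential_Supremum"
begin

text \<open>The unit circle is parametrised by the angle \<theta> \<in> [0, 2\<pi>]; functions on T are
  functions real \<Rightarrow> complex, considered on this interval (the endpoint is a null set).\<close>

definition circ :: "real measure" where
  "circ = lebesgue_on {0..2*pi}"

definition linf_norm :: "(real \<Rightarrow> complex) \<Rightarrow> ereal" where
  "linf_norm f = esssup circ (\<lambda>\<theta>. ereal (cmod (f \<theta>)))"

definition in_Linf :: "(real \<Rightarrow> complex) \<Rightarrow> bool" where
  "in_Linf f \<longleftrightarrow> f \<in> borel_measurable circ \<and> linf_norm f < \<infinity>"

definition fourier_coeff :: "(real \<Rightarrow> complex) \<Rightarrow> int \<Rightarrow> complex" where
  "fourier_coeff f n =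
     complex_of_real (1 / (2*pi)) *
       (LINT \<theta>|circ. f \<theta> * exp (- \<i> * of_int n * complex_of_real \<theta>))"

definition G_set :: "(int \<Rightarrow> complex) \<Rightarrow> nat \<Rightarrow> (real \<Rightarrow> complex) set" where
  "G_set a N = {f. in_Linf f \<and> (\<forall>n::int. \<bar>n\<bar> \<le> int N \<longrightarrow> fourier_coeff f n = a n)}"

definition alt_step :: "real \<Rightarrow> nat \<Rightarrow> (real \<Rightarrow> complex) \<Rightarrow> bool" where
  "alt_step c n f \<longleftrightarrow> c > 0 \<and> n \<ge> 1 \<and>
     (\<exists>t::nat \<Rightarrow> real.
        (\<forall>k<2*n. t k < t (Suc k)) \<and> t (2*n) = t 0 + 2*pi \<and>
        (AE \<theta> in circ. \<forall>k<2*n. (\<exists>m::int. t k < \<theta> + 2 * pi * real_of_int m \<and> \<theta> + 2 * pi * real_of_int m < t (Suc k))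
              \<longrightarrow> f \<theta> = complex_of_real ((-1)^k * c)))"

definition const_ae :: "real \<Rightarrow> (real \<Rightarrow> complex) \<Rightarrow> bool" where
  "const_ae c f \<longleftrightarrow> (AE \<theta> in circ. f \<theta> = complex_of_real c)"

end

theory Submission
  imports Defs "HOL-Computational_Algebra.Polynomial"
begin

lemma no_zero_sign:
  fixes P :: "real \<Rightarrow> real"
  assumes cont: "continuous_on UNIV P" and nz: "\<forall>y\<in>{a..b}. P y \<noteq> 0" and x: "x \<in> {a..b}"
  shows "sgn (P x) = sgn (P a)"
proof (rule ccontr)
  assume ne: "sgn (P x) \<noteq> sgn (P a)"
  have ax: "a \<le> x" using x by auto
  have c: "continuous_on {a..x} P" using continuous_on_subset[OF cont] by auto
  have "P a \<noteq> 0" "P x \<noteq> 0" using nz x by auto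
  then consider "P a < 0" "P x > 0" | "P a > 0" "P x < 0" using ne
    by (metis linorder_neqE_linordered_idom sgn_neg sgn_pos)
  then obtain y where "a \<le> y" "y \<le> x" "P y = 0"
  proof cases
    case 1 then show ?thesis using IVT'[of P a 0 x] c ax that by auto
  next
    case 2 then show ?thesis using IVT2'[of P x 0 a] c ax that by auto
  qed
  then show False using nz x by auto
qed

lemma sign_structure_n:
  fixes P :: "real \<Rightarrow> real"
  assumes cont: "continuous_on UNIV P"
  shows "a < b \<Longrightarrow> P a \<noteq> 0 \<Longrightarrow> P b \<noteq> 0 \<Longrightarrow> finite {x\<in>{a<..<b}. P x = 0} \<Longrightarrow>
    card {x\<in>{a<..<b}. P x = 0} = n \<Longrightarrow>
    \<exists>r c. r \<le> n \<and> c 0 = a \<and> c (Suc r) = b \<and> (\<forall>i\<le>r. c i < c (Suc i)) \<and>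
    (\<forall>i\<le>r. \<forall>x. c i < x \<and> x < c (Suc i) \<and> P x \<noteq> 0 \<longrightarrow> sgn (P x) = sgn (P a) * (-1)^i) \<and>
    sgn (P b) = sgn (P a) * (-1)^r"
proof (induction n arbitrary: b rule: less_induct)
  case (less n)
  let ?Z = "{x\<in>{a<..<b}. P x = 0}"
  show ?case
  proof (cases "?Z = {}")
    case True
    have nz: "\<forall>y\<in>{a..b}. P y \<noteq> 0" using True less.prems by (auto simp: less_le)
    define c where "c = (\<lambda>i::nat. if i = 0 then a else b)"
    have "sgn (P b) = sgn (P a)" using no_zero_sign[OF cont nz, of b] less.prems by auto
    moreover have "sgn (P x) = sgn (P a)" if "a < x" "x < b" for x
      using no_zero_sign[OF cont nz, of x] that by auto
    ultimately show ?thesis using less.prems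
      by (intro exI[of _ 0] exI[of _ c]) (auto simp: c_def)
  next
    case False
    define z where "z = Max ?Z"
    have finZ: "finite ?Z" using less.prems by auto
    have zZ: "z \<in> ?Z" unfolding z_def using Max_in[OF finZ False] .
    have zmax: "y \<le> z" if "y \<in> ?Z" for y unfolding z_def using Max_ge[OF finZ that] .
    define Z' where "Z' = ?Z - {z}"
    define w where "w = Max (insert a Z')"
    have finZ': "finite Z'" using finZ unfolding Z'_def by auto
    have wZ: "w \<in> insert a Z'" unfolding w_def using Max_in[of "insert a Z'"] finZ' by simp
    have wge: "y \<le> w" if "y \<in> insert a Z'" for y unfolding w_def using Max_ge[of "insert a Z'" y] finZ' that by simp
    have az: "a < z" "z < b" "P z = 0" using zZ by auto
    have wz: "w < z"
    proof -
      have "w \<le> z" using wZ zmax az unfolding Z'_def by auto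
      moreover have "w \<noteq> z" using wZ az unfolding Z'_def by auto
      ultimately show ?thesis by simp
    qed
    have aw: "a \<le> w" using wge by auto
    define e where "e = (w + z) / 2"
    have we: "w < e" "e < z" "a < e" using wz aw unfolding e_def by auto
    have Pe: "P e \<noteq> 0"
    proof
      assume "P e = 0"
      then have "e \<in> ?Z" using we az by auto
      then have "e \<in> Z'" using we unfolding Z'_def by auto
      then show False using wge[of e] we by auto
    qed
    have Zsub: "{x\<in>{a<..<e}. P x = 0} = Z'"
    proof (intro equalityI subsetI)
      fix x assume "x \<in> {x\<in>{a<..<e}. P x = 0}"
      then show "x \<in> Z'" unfolding Z'_def using we az by auto
    next
      fix x assume x: "x \<in> Z'"
      then have "x \<le> w" using wge by auto
      then show "x \<in> {x\<in>{a<..<e}. P x = 0}" using x we unfolding Z'_def by auto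
    qed
    have cardZ'': "card Z' + 1 = n" using less.prems(5) zZ finZ unfolding Z'_def
      using card.remove[of ?Z z] by simp
    then have cardZ': "card Z' < n" by simp
    obtain r c where IH: "r \<le> card Z'" "c 0 = a" "c (Suc r) = e" "\<forall>i\<le>r. c i < c (Suc i)"
      "\<forall>i\<le>r. \<forall>x. c i < x \<and> x < c (Suc i) \<and> P x \<noteq> 0 \<longrightarrow> sgn (P x) = sgn (P a) * (-1)^i"
      "sgn (P e) = sgn (P a) * (-1)^r"
      using less.IH[OF cardZ' we(3) less.prems(2) Pe] Zsub finZ' by auto
    have s1: "sgn (P x) = sgn (P e)" if "e \<le> x" "x < z" for x
    proof -
      have "\<forall>y\<in>{e..x}. P y \<noteq> 0"
      proof
        fix y assume y: "y \<in> {e..x}"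
        show "P y \<noteq> 0"
        proof
          assume "P y = 0"
          then have "y \<in> Z'" using y we az that unfolding Z'_def by auto
          then show False using wge[of y] y we by auto
        qed
      qed
      then show ?thesis using no_zero_sign[OF cont, of e x x] that by auto
    qed
    have s2: "sgn (P x) = sgn (P b)" if "z < x" "x \<le> b" for x
    proof -
      have "\<forall>y\<in>{x..b}. P y \<noteq> 0"
      proof
        fix y assume y: "y \<in> {x..b}"
        show "P y \<noteq> 0"
        proof
          assume "P y = 0"
          then have "y \<in> ?Z \<or> y = b" using y az that by auto
          then show False using zmax[of y] y that less.prems(3) \<open>P y = 0\<close> by auto
        qed
      qed
      then show ?thesis using no_zero_sign[OF cont, of x b b] that by auto
    qed
    have sgnv: "sgn (P x) = 1 \<or> sgn (P x) = -1" if "P x \<noteq> 0" for x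
      using that by (auto simp: sgn_if)
    have cr: "c r < e" using IH(3,4) by auto
    show ?thesis
    proof (cases "sgn (P e) = sgn (P b)")
      case True
      define c' where "c' = c(Suc r := b)"
      show ?thesis
      proof (intro exI[of _ r] exI[of _ c'] conjI allI impI)
        show "r \<le> n" using IH(1) cardZ' by simp
        show "c' 0 = a" using IH(2) by (simp add: c'_def)
        show "c' (Suc r) = b" by (simp add: c'_def)
        fix i assume i: "i \<le> r"
        show "c' i < c' (Suc i)"
          using IH(4) i cr we az by (cases "i = r") (auto simp: c'_def)
      next
        fix i x assume i: "i \<le> r" and x: "c' i < x \<and> x < c' (Suc i) \<and> P x \<noteq> 0"
        show "sgn (P x) = sgn (P a) * (-1)^i"
        proof (cases "i = r")
          case False
          then show ?thesis using IH(5) i x by (auto simp: c'_def)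
        next
          case ir: True
          have "c r < x" "x < b" using x ir by (auto simp: c'_def)
          consider "x < e" | "x = e" | "e < x" "x < z" | "x = z" | "z < x" by linarith
          then show ?thesis
          proof cases
            case 1 then show ?thesis using IH(5) \<open>c r < x\<close> ir x IH(3) by auto
          next
            case 2 then show ?thesis using IH(6) ir by simp
          next
            case 3 then show ?thesis using s1[of x] IH(6) ir by simp
          next
            case 4 then show ?thesis using az x by simp
          next
            case 5 then show ?thesis using s2[of x] \<open>x < b\<close> True IH(6) ir by simp
          qed
        qed
      next
        show "sgn (P b) = sgn (P a) * (-1)^r" using True IH(6) by simp
      qed
    next
      case False
      define c' where "c' = c(Suc r := z, Suc (Suc r) := b)"
      have flip: "sgn (P b) = - sgn (P e)" using False sgnv[OF Pe] sgnv[OF less.prems(3)] by auto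
      show ?thesis
      proof (intro exI[of _ "Suc r"] exI[of _ c'] conjI allI impI)
        show "Suc r \<le> n" using IH(1) cardZ'' by simp
        show "c' 0 = a" using IH(2) by (simp add: c'_def)
        show "c' (Suc (Suc r)) = b" by (simp add: c'_def)
        fix i assume i: "i \<le> Suc r"
        show "c' i < c' (Suc i)"
          using IH(4) i cr we az by (cases "i = r"; cases "i = Suc r") (auto simp: c'_def)
      next
        fix i x assume i: "i \<le> Suc r" and x: "c' i < x \<and> x < c' (Suc i) \<and> P x \<noteq> 0"
        show "sgn (P x) = sgn (P a) * (-1)^i"
        proof (cases "i < r")
          case True
          then show ?thesis using IH(5) i x by (auto simp: c'_def)
        next
          case False
          then consider "i = r" | "i = Suc r" using i by linarith
          then show ?thesis
          proof cases
            case ir: 1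
            have "c r < x" "x < z" using x ir by (auto simp: c'_def)
            consider "x < e" | "x = e" | "e < x" by linarith
            then show ?thesis
            proof cases
              case 1 then show ?thesis using IH(5) \<open>c r < x\<close> ir x IH(3) by auto
            next
              case 2 then show ?thesis using IH(6) ir by simp
            next
              case 3 then show ?thesis using s1[of x] \<open>x < z\<close> IH(6) ir by simp
            qed
          next
            case ir: 2
            have "z < x" "x < b" using x ir by (auto simp: c'_def)
            then show ?thesis using s2[of x] flip IH(6) ir by simp
          qed
        qed
      next
        show "sgn (P b) = sgn (P a) * (-1)^Suc r" using flip IH(6) by simp
      qed
    qed
  qed
qed


lemma circ_lint_eq:
  fixes f :: "real \<Rightarrow> real"
  assumes "continuous_on {0..2*pi} f" "(f has_integral I) {0..2*pi}"
  shows "(LINT \<theta>|circ. f \<theta>) = I"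
proof -
  have "integrable circ f" unfolding circ_def using assms(1) by (rule continuous_imp_integrable_real)
  then have "(f has_integral (LINT \<theta>|circ. f \<theta>)) {0..2*pi}"
    unfolding circ_def by (intro has_integral_integral_lebesgue_on) auto
  then show ?thesis using assms(2) has_integral_unique by blast
qed

lemma int_cos_mult:
  fixes m :: int
  shows "(LINT \<theta>|circ. cos (of_int m * \<theta>)) = (if m = 0 then 2*pi else 0)"
proof (cases "m = 0")
  case True
  have "((\<lambda>\<theta>. 1::real) has_integral 2*pi) {0..2*pi}"
    using has_integral_const_real[of "1::real" 0 "2*pi"] by simp
  then have "(LINT \<theta>|circ. (\<lambda>\<theta>. 1::real) \<theta>) = 2*pi" by (intro circ_lint_eq) auto
  then show ?thesis using True by simp
next
  case False
  have "((\<lambda>\<theta>. cos (of_int m * \<theta>)) has_integral (sin (of_int m * (2*pi)) / of_int m - sin (of_int m * 0) / of_int m)) {0..2*pi}"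
    apply (rule fundamental_theorem_of_calculus)
     apply simp
    using False by (auto intro!: derivative_eq_intros simp: has_real_derivative_iff_has_vector_derivative[symmetric])
  moreover have "sin (of_int m * (2*pi)) = 0"
    by (metis mult.commute mult.left_commute sin_integer_2pi Ints_of_int)
  ultimately show ?thesis using False
    by (intro circ_lint_eq) (auto intro!: continuous_intros)
qed

lemma int_sin_mult:
  fixes m :: int
  shows "(LINT \<theta>|circ. sin (of_int m * \<theta>)) = 0"
proof (cases "m = 0")
  case True
  then show ?thesis by simp
next
  case False
  have "((\<lambda>\<theta>. sin (of_int m * \<theta>)) has_integral ((- cos (of_int m * (2*pi)) / of_int m) - (- cos (of_int m * 0) / of_int m))) {0..2*pi}"
    apply (rule fundamental_theorem_of_calculus)
     apply simp
    using False by (auto intro!: derivative_eq_intros simp: has_real_derivative_iff_has_vector_derivative[symmetric])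
  moreover have "cos (of_int m * (2*pi)) = 1"
    by (metis mult.commute mult.left_commute cos_integer_2pi Ints_of_int)
  ultimately show ?thesis using False
    by (intro circ_lint_eq) (auto intro!: continuous_intros)
qed

lemma cont_int_circ:
  fixes f :: "real \<Rightarrow> 'b::euclidean_space"
  assumes "continuous_on UNIV f"
  shows "integrable circ f"
  unfolding circ_def by (rule continuous_imp_integrable_real) (rule continuous_on_subset[OF assms], simp)

lemma cc_orth:
  fixes j k :: nat
  shows "(LINT \<theta>|circ. cos (real k * \<theta>) * cos (real j * \<theta>)) = (if k = j then (if k = 0 then 2*pi else pi) else 0)"
proof -
  have eq: "cos (real k * \<theta>) * cos (real j * \<theta>) = cos (of_int (int k - int j) * \<theta>) / 2 + cos (of_int (int k + int j) * \<theta>) / 2" for \<theta>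
    by (simp add: cos_times_cos left_diff_distrib distrib_right add_divide_distrib)
  have "(LINT \<theta>|circ. cos (real k * \<theta>) * cos (real j * \<theta>)) =
     (LINT \<theta>|circ. cos (of_int (int k - int j) * \<theta>) / 2 + cos (of_int (int k + int j) * \<theta>) / 2)"
    by (simp only: eq)
  also have "\<dots> = (LINT \<theta>|circ. cos (of_int (int k - int j) * \<theta>)) / 2 + (LINT \<theta>|circ. cos (of_int (int k + int j) * \<theta>)) / 2"
    by (subst Bochner_Integration.integral_add) (auto intro!: cont_int_circ continuous_intros)
  also have "\<dots> = (if k = j then (if k = 0 then 2*pi else pi) else 0)"
    by (simp only: int_cos_mult) auto
  finally show ?thesis .
qed

lemma ss_orth:
  fixes j k :: nat
  shows "(LINT \<theta>|circ. sin (real k * \<theta>) * sin (real j * \<theta>)) = (if k = j \<and> k \<noteq> 0 then pi else 0)"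
proof -
  have eq: "sin (real k * \<theta>) * sin (real j * \<theta>) = cos (of_int (int k - int j) * \<theta>) / 2 - cos (of_int (int k + int j) * \<theta>) / 2" for \<theta>
    by (simp add: sin_times_sin left_diff_distrib distrib_right diff_divide_distrib)
  have "(LINT \<theta>|circ. sin (real k * \<theta>) * sin (real j * \<theta>)) =
     (LINT \<theta>|circ. cos (of_int (int k - int j) * \<theta>) / 2 - cos (of_int (int k + int j) * \<theta>) / 2)"
    by (simp only: eq)
  also have "\<dots> = (LINT \<theta>|circ. cos (of_int (int k - int j) * \<theta>)) / 2 - (LINT \<theta>|circ. cos (of_int (int k + int j) * \<theta>)) / 2"
    by (subst Bochner_Integration.integral_diff) (auto intro!: cont_int_circ continuous_intros)
  also have "\<dots> = (if k = j \<and> k \<noteq> 0 then pi else 0)"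
    by (simp only: int_cos_mult) auto
  finally show ?thesis .
qed

lemma sc_orth:
  fixes j k :: nat
  shows "(LINT \<theta>|circ. sin (real k * \<theta>) * cos (real j * \<theta>)) = 0"
proof -
  have eq: "sin (real k * \<theta>) * cos (real j * \<theta>) = sin (of_int (int k + int j) * \<theta>) / 2 + sin (of_int (int k - int j) * \<theta>) / 2" for \<theta>
    by (simp add: sin_times_cos left_diff_distrib distrib_right add_divide_distrib)
  have "(LINT \<theta>|circ. sin (real k * \<theta>) * cos (real j * \<theta>)) =
     (LINT \<theta>|circ. sin (of_int (int k + int j) * \<theta>) / 2 + sin (of_int (int k - int j) * \<theta>) / 2)"
    by (simp only: eq)
  also have "\<dots> = (LINT \<theta>|circ. sin (of_int (int k + int j) * \<theta>)) / 2 + (LINT \<theta>|circ. sin (of_int (int k - int j) * \<theta>)) / 2"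
    by (subst Bochner_Integration.integral_add) (auto intro!: cont_int_circ continuous_intros)
  also have "\<dots> = 0"
    using int_sin_mult[of "int k + int j"] int_sin_mult[of "int k - int j"] by simp
  finally show ?thesis .
qed

lemma cs_orth:
  fixes j k :: nat
  shows "(LINT \<theta>|circ. cos (real k * \<theta>) * sin (real j * \<theta>)) = 0"
  using sc_orth[of j k] by (simp add: mult.commute)

definition tp :: "nat \<Rightarrow> (nat \<Rightarrow> real) \<Rightarrow> real \<Rightarrow> real" where
  "tp N x \<theta> = (\<Sum>k\<le>N. x (2*k) * cos (real k * \<theta>) + x (2*k+1) * sin (real k * \<theta>))"

lemma tp_cont[continuous_intros]: "continuous_on S (tp N x)"
  unfolding tp_def by (intro continuous_intros)

lemma tp_coeff_cos:
  assumes "j \<le> N"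
  shows "(LINT \<theta>|circ. tp N x \<theta> * cos (real j * \<theta>)) = x (2*j) * (if j = 0 then 2*pi else pi)"
proof -
  have "(LINT \<theta>|circ. tp N x \<theta> * cos (real j * \<theta>)) =
     (\<Sum>k\<le>N. x (2*k) * (LINT \<theta>|circ. cos (real k * \<theta>) * cos (real j * \<theta>)) + x (2*k+1) * (LINT \<theta>|circ. sin (real k * \<theta>) * cos (real j * \<theta>)))"
    unfolding tp_def sum_distrib_right distrib_right
    apply (subst Bochner_Integration.integral_sum)
     apply (auto intro!: cont_int_circ continuous_intros)[1]
    apply (intro sum.cong refl)
    apply (subst Bochner_Integration.integral_add)
      apply (auto intro!: cont_int_circ continuous_intros)[2]
    apply (simp add: mult.assoc)
    done
  also have "\<dots> = (\<Sum>k\<le>N. if k = j then x (2*j) * (if j = 0 then 2*pi else pi) else 0)"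
    by (intro sum.cong) (auto simp: cc_orth sc_orth)
  also have "\<dots> = x (2*j) * (if j = 0 then 2*pi else pi)"
    using assms by (simp add: sum.delta)
  finally show ?thesis .
qed

lemma tp_coeff_sin:
  assumes "j \<le> N" "j \<noteq> 0"
  shows "(LINT \<theta>|circ. tp N x \<theta> * sin (real j * \<theta>)) = x (2*j+1) * pi"
proof -
  have "(LINT \<theta>|circ. tp N x \<theta> * sin (real j * \<theta>)) =
     (\<Sum>k\<le>N. x (2*k) * (LINT \<theta>|circ. cos (real k * \<theta>) * sin (real j * \<theta>)) + x (2*k+1) * (LINT \<theta>|circ. sin (real k * \<theta>) * sin (real j * \<theta>)))"
    unfolding tp_def sum_distrib_right distrib_right
    apply (subst Bochner_Integration.integral_sum)
     apply (auto intro!: cont_int_circ continuous_intros)[1]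
    apply (intro sum.cong refl)
    apply (subst Bochner_Integration.integral_add)
      apply (auto intro!: cont_int_circ continuous_intros)[2]
    apply (simp add: mult.assoc)
    done
  also have "\<dots> = (\<Sum>k\<le>N. if k = j then x (2*j+1) * pi else 0)"
    using assms by (intro sum.cong) (auto simp: cs_orth ss_orth)
  also have "\<dots> = x (2*j+1) * pi"
    using assms by (simp add: sum.delta)
  finally show ?thesis .
qed

lemma space_circ[simp]: "space circ = {0..2*pi}"
  by (simp add: circ_def)

lemma circ_measure: "measure circ (space circ) = 2*pi"
proof -
  have "((\<lambda>\<theta>. 1::real) has_integral 2*pi) {0..2*pi}"
    using has_integral_const_real[of "1::real" 0 "2*pi"] by simp
  then have "(LINT \<theta>|circ. (\<lambda>\<theta>. 1::real) \<theta>) = 2*pi" by (intro circ_lint_eq) auto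
  then show ?thesis by simp
qed

lemma finite_circ[simp]: "finite_measure circ"
  unfolding circ_def by (intro finite_measure_lebesgue_on) auto

lemma emeasure_circ: "emeasure circ (space circ) = ennreal (2*pi)"
  using circ_measure finite_circ by (metis finite_measure.emeasure_eq_measure)

lemma sum_pairs: "(\<Sum>k\<le>N. f (2*k) + f (2*k+1)) = (\<Sum>i<2*N+2. f i)" for f :: "nat \<Rightarrow> real"
  by (induction N) (auto simp: numeral_eq_Suc)

lemma tp_bound: "\<bar>tp N x \<theta>\<bar> \<le> (\<Sum>i<2*N+2. \<bar>x i\<bar>)"
proof -
  have "\<bar>tp N x \<theta>\<bar> \<le> (\<Sum>k\<le>N. \<bar>x (2*k) * cos (real k * \<theta>) + x (2*k+1) * sin (real k * \<theta>)\<bar>)"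
    unfolding tp_def by (rule sum_abs)
  also have "\<dots> \<le> (\<Sum>k\<le>N. \<bar>x (2*k)\<bar> + \<bar>x (2*k+1)\<bar>)"
  proof (rule sum_mono)
    fix k
    have "\<bar>x (2*k) * cos (real k * \<theta>)\<bar> \<le> \<bar>x (2*k)\<bar>"
      by (simp add: abs_mult mult_left_le)
    moreover have "\<bar>x (2*k+1) * sin (real k * \<theta>)\<bar> \<le> \<bar>x (2*k+1)\<bar>"
      by (simp add: abs_mult mult_left_le)
    ultimately show "\<bar>x (2*k) * cos (real k * \<theta>) + x (2*k+1) * sin (real k * \<theta>)\<bar> \<le> \<bar>x (2*k)\<bar> + \<bar>x (2*k+1)\<bar>"
      by linarith
  qed
  also have "\<dots> = (\<Sum>i<2*N+2. \<bar>x i\<bar>)" by (rule sum_pairs)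
  finally show ?thesis .
qed

lemma tp_lin: "tp N (\<lambda>i. x i + t * y i) \<theta> = tp N x \<theta> + t * tp N y \<theta>"
  unfolding tp_def by (simp add: sum.distrib sum_distrib_left algebra_simps)

lemma tp_diff: "tp N (\<lambda>i. x i - y i) \<theta> = tp N x \<theta> - tp N y \<theta>"
  unfolding tp_def by (simp add: sum_subtractf algebra_simps)

lemma tp_scale: "tp N (\<lambda>i. c * x i) \<theta> = c * tp N x \<theta>"
  unfolding tp_def by (simp add: sum_distrib_left algebra_simps)

lemma tp_neg: "tp N (\<lambda>i. - x i) \<theta> = - tp N x \<theta>"
  using tp_scale[where c="-1" and x=x] by simp

definition Xs :: "nat \<Rightarrow> (nat \<Rightarrow> real) set" where
  "Xs N = {x. x 1 = 0 \<and> (\<forall>i\<ge>2*N+2. x i = 0)}"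

definition nrm :: "nat \<Rightarrow> (nat \<Rightarrow> real) \<Rightarrow> real" where
  "nrm N x = (LINT \<theta>|circ. \<bar>tp N x \<theta>\<bar>) / (2*pi)"

lemma int_tp[intro]: "integrable circ (tp N x)"
  by (intro cont_int_circ continuous_intros)

lemma int_abs_tp[intro]: "integrable circ (\<lambda>\<theta>. \<bar>tp N x \<theta>\<bar>)"
  by (intro cont_int_circ continuous_intros)

lemma nrm_nonneg: "nrm N x \<ge> 0"
  unfolding nrm_def by (intro divide_nonneg_pos integral_nonneg_AE) auto

lemma nrm_scale: "nrm N (\<lambda>i. c * x i) = \<bar>c\<bar> * nrm N x"
  unfolding nrm_def tp_scale by (simp add: abs_mult)

lemma nrm_lip: "\<bar>nrm N x - nrm N y\<bar> \<le> (\<Sum>i<2*N+2. \<bar>x i - y i\<bar>)"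
proof -
  let ?C = "(\<Sum>i<2*N+2. \<bar>x i - y i\<bar>)"
  have "\<bar>(LINT \<theta>|circ. \<bar>tp N x \<theta>\<bar>) - (LINT \<theta>|circ. \<bar>tp N y \<theta>\<bar>)\<bar> = \<bar>LINT \<theta>|circ. \<bar>tp N x \<theta>\<bar> - \<bar>tp N y \<theta>\<bar>\<bar>"
    by (subst Bochner_Integration.integral_diff) auto
  also have "\<dots> \<le> (LINT \<theta>|circ. \<bar>\<bar>tp N x \<theta>\<bar> - \<bar>tp N y \<theta>\<bar>\<bar>)"
    using integral_norm_bound[of circ "\<lambda>\<theta>. \<bar>tp N x \<theta>\<bar> - \<bar>tp N y \<theta>\<bar>"] by simp
  also have "\<dots> \<le> (LINT \<theta>|circ. ?C)"
  proof (rule integral_mono)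
    show "integrable circ (\<lambda>\<theta>. \<bar>\<bar>tp N x \<theta>\<bar> - \<bar>tp N y \<theta>\<bar>\<bar>)"
      by (intro cont_int_circ continuous_intros)
    show "integrable circ (\<lambda>\<theta>. ?C)" by (intro cont_int_circ continuous_intros)
    fix \<theta>
    have "\<bar>\<bar>tp N x \<theta>\<bar> - \<bar>tp N y \<theta>\<bar>\<bar> \<le> \<bar>tp N x \<theta> - tp N y \<theta>\<bar>" by linarith
    also have "\<dots> = \<bar>tp N (\<lambda>i. x i - y i) \<theta>\<bar>" by (simp add: tp_diff)
    also have "\<dots> \<le> ?C" by (rule tp_bound)
    finally show "\<bar>\<bar>tp N x \<theta>\<bar> - \<bar>tp N y \<theta>\<bar>\<bar> \<le> ?C" .
  qed
  also have "\<dots> = ?C * (2*pi)" using circ_measure by simp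
  finally show ?thesis unfolding nrm_def
    by (simp add: diff_divide_distrib[symmetric] pos_divide_le_eq)
qed

lemma coeff_bound:
  assumes "x \<in> Xs N"
  shows "\<bar>x i\<bar> \<le> 2 * nrm N x"
proof -
  have b1: "\<bar>LINT \<theta>|circ. tp N x \<theta> * h \<theta>\<bar> \<le> (LINT \<theta>|circ. \<bar>tp N x \<theta>\<bar>)"
    if "continuous_on UNIV h" "\<And>\<theta>. \<bar>h \<theta>\<bar> \<le> 1" for h
  proof -
    have "\<bar>LINT \<theta>|circ. tp N x \<theta> * h \<theta>\<bar> \<le> (LINT \<theta>|circ. \<bar>tp N x \<theta> * h \<theta>\<bar>)"
      using integral_norm_bound[of circ "\<lambda>\<theta>. tp N x \<theta> * h \<theta>"] by simp
    also have "\<dots> \<le> (LINT \<theta>|circ. \<bar>tp N x \<theta>\<bar>)"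
    proof (rule integral_mono)
      show "integrable circ (\<lambda>\<theta>. \<bar>tp N x \<theta> * h \<theta>\<bar>)"
        by (intro cont_int_circ continuous_intros that)
      fix \<theta> show "\<bar>tp N x \<theta> * h \<theta>\<bar> \<le> \<bar>tp N x \<theta>\<bar>"
        using that(2)[of \<theta>] by (simp add: abs_mult mult_left_le)
    qed auto
    finally show ?thesis .
  qed
  have I: "(LINT \<theta>|circ. \<bar>tp N x \<theta>\<bar>) = 2*pi * nrm N x" unfolding nrm_def by simp
  have n0: "nrm N x \<ge> 0" by (rule nrm_nonneg)
  consider "i = 1" | "i \<ge> 2*N+2" | j where "i = 2*j" "j \<le> N" | j where "i = 2*j+1" "j \<le> N" "j \<noteq> 0"
  proof -
    assume h1: "i = 1 \<Longrightarrow> thesis" and h2: "2*N+2 \<le> i \<Longrightarrow> thesis"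
      and h3: "\<And>j. i = 2*j \<Longrightarrow> j \<le> N \<Longrightarrow> thesis" and h4: "\<And>j. i = 2*j+1 \<Longrightarrow> j \<le> N \<Longrightarrow> j \<noteq> 0 \<Longrightarrow> thesis"
    show thesis
    proof (cases "even i")
      case True
      then obtain j where "i = 2*j" by blast
      then show thesis using h2 h3 by (cases "j \<le> N") auto
    next
      case False
      then obtain j where "i = 2*j+1" using oddE by blast
      then show thesis using h1 h2 h4 by (cases "j \<le> N"; cases "j = 0") auto
    qed
  qed
  then show ?thesis
  proof cases
    case 1 then show ?thesis using assms n0 by (simp add: Xs_def)
  next
    case 2 then show ?thesis using assms n0 by (simp add: Xs_def)
  next
    case 3
    have c: "\<bar>LINT \<theta>|circ. tp N x \<theta> * cos (real j * \<theta>)\<bar> \<le> (LINT \<theta>|circ. \<bar>tp N x \<theta>\<bar>)"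
      by (rule b1) (auto intro!: continuous_intros)
    have "\<bar>x (2*j)\<bar> * (if j = 0 then 2*pi else pi) \<le> 2*pi * nrm N x"
      using c unfolding tp_coeff_cos[OF 3(2)] I by (simp add: abs_mult)
    moreover have "pi \<le> (if j = 0 then 2*pi else pi)" using pi_gt_zero by simp
    ultimately have "\<bar>x (2*j)\<bar> * pi \<le> 2*pi * nrm N x"
      by (meson abs_ge_zero mult_left_mono order_trans)
    then show ?thesis using 3 pi_gt_zero by (simp add: mult.commute)
  next
    case 4
    have c: "\<bar>LINT \<theta>|circ. tp N x \<theta> * sin (real j * \<theta>)\<bar> \<le> (LINT \<theta>|circ. \<bar>tp N x \<theta>\<bar>)"
      by (rule b1) (auto intro!: continuous_intros)
    have "\<bar>x (2*j+1)\<bar> * pi \<le> 2*pi * nrm N x"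
      using c unfolding tp_coeff_sin[OF 4(2,3)] I by (simp add: abs_mult)
    then show ?thesis using 4 pi_gt_zero by (simp add: mult.commute)
  qed
qed

definition Lf :: "(int \<Rightarrow> complex) \<Rightarrow> nat \<Rightarrow> (nat \<Rightarrow> real) \<Rightarrow> real" where
  "Lf a N x = (\<Sum>k\<le>N. x (2*k) * Re (a (int k)) - x (2*k+1) * Im (a (int k)))"

lemma Lf_lin: "Lf a N (\<lambda>i. x i + t * y i) = Lf a N x + t * Lf a N y"
  unfolding Lf_def by (simp add: sum.distrib sum_distrib_left algebra_simps sum_subtractf)

lemma Lf_scale: "Lf a N (\<lambda>i. c * x i) = c * Lf a N x"
  unfolding Lf_def by (simp add: sum_distrib_left algebra_simps sum_subtractf)

lemma cont_coord[continuous_intros]: "continuous_on S (\<lambda>x::nat \<Rightarrow> real. x i)"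
  by (rule continuous_on_subset[OF continuous_on_product_coordinates]) simp

lemma Lf_cont: "continuous_on S (Lf a N)"
  unfolding Lf_def by (intro continuous_intros)

lemma coord_tendsto:
  fixes X :: "nat \<Rightarrow> nat \<Rightarrow> real"
  assumes "X \<longlonglongrightarrow> l"
  shows "(\<lambda>n. X n i) \<longlonglongrightarrow> l i"
proof -
  have "isCont (\<lambda>x::nat\<Rightarrow>real. x i) l"
    using continuous_on_product_coordinates[of i] continuous_on_eq_continuous_at[OF open_UNIV] by blast
  then show ?thesis using assms isCont_tendsto_compose by blast
qed

lemma nrm_tendsto:
  fixes X :: "nat \<Rightarrow> nat \<Rightarrow> real"
  assumes "X \<longlonglongrightarrow> l"
  shows "(\<lambda>n. nrm N (X n)) \<longlonglongrightarrow> nrm N l"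
proof -
  have "(\<lambda>n. (\<Sum>i<2*N+2. \<bar>X n i - l i\<bar>)) \<longlonglongrightarrow> (\<Sum>i<2*N+2. \<bar>l i - l i\<bar>)"
    by (intro tendsto_intros coord_tendsto assms)
  then have z: "(\<lambda>n. (\<Sum>i<2*N+2. \<bar>X n i - l i\<bar>)) \<longlonglongrightarrow> 0" by simp
  have "(\<lambda>n. nrm N (X n) - nrm N l) \<longlonglongrightarrow> 0"
    by (rule Lim_null_comparison[OF _ z]) (simp only: real_norm_def nrm_lip eventually_True)
  then show ?thesis by (rule LIM_zero_cancel)
qed

definition Kb :: "nat \<Rightarrow> (nat \<Rightarrow> real) set" where
  "Kb N = PiE UNIV (\<lambda>i. if i = 1 \<or> 2*N+2 \<le> i then {0} else {-2..2})"

lemma Kb_compact: "compact (Kb N)"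
proof -
  have "compactin (product_topology (\<lambda>i. euclidean) UNIV) (Kb N)"
    unfolding Kb_def compactin_PiE by auto
  then show ?thesis by (simp add: euclidean_product_topology)
qed

lemma nrm_le_closed: "closed {x. nrm N x \<le> c}"
  unfolding closed_sequential_limits
proof (intro allI impI, elim conjE)
  fix X l assume "\<forall>n. X n \<in> {x. nrm N x \<le> c}" "X \<longlonglongrightarrow> l"
  then show "l \<in> {x. nrm N x \<le> c}"
    using nrm_tendsto[of X l N] LIMSEQ_le_const2 by fastforce
qed

lemma Xs_scale: "x \<in> Xs N \<Longrightarrow> (\<lambda>i. c * x i) \<in> Xs N"
  by (simp add: Xs_def)

lemma Xs_lin: "x \<in> Xs N \<Longrightarrow> y \<in> Xs N \<Longrightarrow> (\<lambda>i. x i + t * y i) \<in> Xs N"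
  by (simp add: Xs_def)

lemma nrm_zero_imp:
  assumes "x \<in> Xs N" "nrm N x = 0"
  shows "x = (\<lambda>i. 0)"
  using coeff_bound[OF assms(1)] assms(2) by fastforce

lemma maximizer:
  "\<exists>p \<in> Xs N. nrm N p \<le> 1 \<and> (\<forall>x\<in>Xs N. Lf a N x \<le> Lf a N p * nrm N x)"
proof -
  define S where "S = Kb N \<inter> {x. nrm N x \<le> 1}"
  have SX: "S = Xs N \<inter> {x. nrm N x \<le> 1}"
  proof (intro equalityI subsetI)
    fix x assume "x \<in> S"
    then have hh: "\<forall>i. x i \<in> (if i = 1 \<or> 2*N+2 \<le> i then {0} else {-2..2})" "nrm N x \<le> 1"
      unfolding S_def Kb_def PiE_def Pi_def by auto
    then show "x \<in> Xs N \<inter> {x. nrm N x \<le> 1}"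
    proof -
      from hh(1) have "x 1 = 0" by (metis singletonD)
      moreover from hh(1) have "\<forall>i\<ge>2*N+2. x i = 0" by (metis singletonD)
      ultimately show ?thesis using \<open>nrm N x \<le> 1\<close> unfolding Xs_def by blast
    qed
  next
    fix x assume x: "x \<in> Xs N \<inter> {x. nrm N x \<le> 1}"
    have "\<bar>x i\<bar> \<le> 2" for i using coeff_bound[of x N i] x by auto
    then show "x \<in> S" using x unfolding S_def Kb_def Xs_def PiE_def Pi_def extensional_def
      by (auto simp: abs_le_iff) (smt (verit))
  qed
  have "compact S" unfolding S_def by (intro compact_Int_closed Kb_compact nrm_le_closed)
  moreover have "(\<lambda>i. 0) \<in> S" unfolding SX Xs_def nrm_def tp_def by simp
  ultimately obtain p where p: "p \<in> S" "\<And>y. y \<in> S \<Longrightarrow> Lf a N y \<le> Lf a N p"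
    using continuous_attains_sup[of S "Lf a N"] Lf_cont by blast
  have "Lf a N x \<le> Lf a N p * nrm N x" if x: "x \<in> Xs N" for x
  proof (cases "nrm N x = 0")
    case True
    then have "x = (\<lambda>i. 0)" using nrm_zero_imp x by blast
    then show ?thesis using True by (simp add: Lf_def)
  next
    case False
    then have pos: "nrm N x > 0" using nrm_nonneg[of N x] by linarith
    define y where "y = (\<lambda>i. (1 / nrm N x) * x i)"
    have "nrm N y = 1" unfolding y_def nrm_scale using pos by simp
    moreover have "y \<in> Xs N" unfolding y_def by (rule Xs_scale[OF x])
    ultimately have "y \<in> S" unfolding SX by auto
    then have "Lf a N y \<le> Lf a N p" by (rule p(2))
    then have "Lf a N x / nrm N x \<le> Lf a N p" unfolding y_def Lf_scale by simp
    then show ?thesis using pos by (simp add: pos_divide_le_eq mult.commute)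
  qed
  then show ?thesis using p(1) unfolding SX by blast
qed

lemma cont_meas_circ:
  fixes h :: "real \<Rightarrow> 'b::euclidean_space"
  assumes "continuous_on UNIV h" shows "h \<in> borel_measurable circ"
  unfolding circ_def by (rule continuous_imp_measurable_on_sets_lebesgue[OF continuous_on_subset[OF assms]]) auto

lemma circ_not_null: "emeasure circ (space circ) \<noteq> 0"
  using emeasure_circ pi_gt_zero by simp

lemma linf_nonneg: "linf_norm g \<ge> 0"
proof -
  have "esssup circ (\<lambda>\<theta>. ereal 0) \<le> esssup circ (\<lambda>\<theta>. ereal (cmod (g \<theta>)))"
    by (rule esssup_mono) auto
  then show ?thesis unfolding linf_norm_def using esssup_const[OF circ_not_null] by (metis zero_ereal_def)
qed

lemma Linf_bound:
  assumes "in_Linf g"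
  shows "AE \<theta> in circ. cmod (g \<theta>) \<le> real_of_ereal (linf_norm g)"
proof -
  have fin: "linf_norm g < \<infinity>" using assms unfolding in_Linf_def by auto
  have "AE \<theta> in circ. ereal (cmod (g \<theta>)) \<le> linf_norm g"
    unfolding linf_norm_def by (rule esssup_AE)
  then show ?thesis
  proof (rule eventually_mono)
    fix \<theta> assume h: "ereal (cmod (g \<theta>)) \<le> linf_norm g"
    then show "cmod (g \<theta>) \<le> real_of_ereal (linf_norm g)"
      using fin by (cases "linf_norm g") auto
  qed
qed

lemma Linf_meas: "in_Linf g \<Longrightarrow> g \<in> borel_measurable circ"
  unfolding in_Linf_def by auto

lemma Linf_int_mult:
  fixes h :: "real \<Rightarrow> complex"
  assumes "in_Linf g" "continuous_on UNIV h" "\<And>\<theta>. cmod (h \<theta>) \<le> C"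
  shows "integrable circ (\<lambda>\<theta>. g \<theta> * h \<theta>)"
proof -
  interpret finite_measure circ by simp
  show ?thesis
  proof (rule integrable_const_bound[where B="real_of_ereal (linf_norm g) * C"])
    show "AE \<theta> in circ. cmod (g \<theta> * h \<theta>) \<le> real_of_ereal (linf_norm g) * C"
      using Linf_bound[OF assms(1)]
    proof (rule eventually_mono)
      fix \<theta> assume "cmod (g \<theta>) \<le> real_of_ereal (linf_norm g)"
      then show "cmod (g \<theta> * h \<theta>) \<le> real_of_ereal (linf_norm g) * C"
        unfolding norm_mult using assms(3)[of \<theta>] real_of_ereal_pos[OF linf_nonneg[of g]] by (intro mult_mono) auto
    qed
    show "(\<lambda>\<theta>. g \<theta> * h \<theta>) \<in> borel_measurable circ"
      using Linf_meas[OF assms(1)] cont_meas_circ[OF assms(2)] by measurable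
  qed
qed

definition EE :: "int \<Rightarrow> real \<Rightarrow> complex" where
  "EE n \<theta> = exp (- \<i> * of_int n * complex_of_real \<theta>)"

lemma EE_cont[continuous_intros]: "continuous_on S (EE n)"
  unfolding EE_def by (intro continuous_intros)

lemma EE_norm: "cmod (EE n \<theta>) = 1"
  unfolding EE_def by (simp add: norm_exp_eq_Re)

lemma G_int:
  assumes "g \<in> G_set a N" "\<bar>n\<bar> \<le> int N"
  shows "(LINT \<theta>|circ. g \<theta> * EE n \<theta>) = complex_of_real (2*pi) * a n"
proof -
  have "fourier_coeff g n = a n" using assms unfolding G_set_def by auto
  then show ?thesis unfolding fourier_coeff_def EE_def using pi_gt_zero
    by (auto simp: field_simps)
qed

lemma cos_EE: "complex_of_real (cos (real k * \<theta>)) = (EE (- int k) \<theta> + EE (int k) \<theta>) / 2"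
  unfolding EE_def cos_of_real[symmetric] cos_exp_eq by (simp add: algebra_simps)

lemma sin_EE: "complex_of_real (sin (real k * \<theta>)) = (EE (- int k) \<theta> - EE (int k) \<theta>) / (2 * \<i>)"
  unfolding EE_def sin_of_real[symmetric] sin_exp_eq by (simp add: algebra_simps)

lemma G_pair:
  assumes g: "g \<in> G_set a N" and selfadj: "\<And>n. \<bar>n\<bar> \<le> int N \<Longrightarrow> a (- n) = cnj (a n)"
  shows "(LINT \<theta>|circ. g \<theta> * complex_of_real (tp N x \<theta>)) = complex_of_real (2*pi * Lf a N x)"
proof -
  have gL: "in_Linf g" using g unfolding G_set_def by auto
  have ig: "integrable circ (\<lambda>\<theta>. g \<theta> * EE n \<theta>)" for n
    by (rule Linf_int_mult[OF gL]) (auto intro!: continuous_intros simp: EE_norm)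
  define c1 where "c1 k = complex_of_real (x (2*k)) / 2 + complex_of_real (x (2*k+1)) / (2 * \<i>)" for k
  define c2 where "c2 k = complex_of_real (x (2*k)) / 2 - complex_of_real (x (2*k+1)) / (2 * \<i>)" for k
  have eq: "g \<theta> * complex_of_real (tp N x \<theta>) = (\<Sum>k\<le>N. g \<theta> * EE (- int k) \<theta> * c1 k + g \<theta> * EE (int k) \<theta> * c2 k)" for \<theta>
    unfolding tp_def of_real_sum of_real_add of_real_mult cos_EE sin_EE sum_distrib_left c1_def c2_def
    by (intro sum.cong refl) (simp add: field_simps)
  have "(LINT \<theta>|circ. g \<theta> * complex_of_real (tp N x \<theta>)) =
      (\<Sum>k\<le>N. (LINT \<theta>|circ. g \<theta> * EE (- int k) \<theta>) * c1 k + (LINT \<theta>|circ. g \<theta> * EE (int k) \<theta>) * c2 k)"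
    unfolding eq
    apply (subst Bochner_Integration.integral_sum)
     apply (auto intro!: Bochner_Integration.integrable_add integrable_mult_left ig)[1]
    apply (intro sum.cong refl)
    apply (subst Bochner_Integration.integral_add)
      apply (auto intro!: integrable_mult_left ig)[2]
    apply simp
    done
  also have "\<dots> = (\<Sum>k\<le>N. complex_of_real (2*pi) * (cnj (a (int k)) * c1 k + a (int k) * c2 k))"
  proof (intro sum.cong refl)
    fix k assume k: "k \<in> {..N}"
    then have "\<bar>int k\<bar> \<le> int N" "\<bar>- int k\<bar> \<le> int N" by auto
    then show "(LINT \<theta>|circ. g \<theta> * EE (- int k) \<theta>) * c1 k + (LINT \<theta>|circ. g \<theta> * EE (int k) \<theta>) * c2 k =
        complex_of_real (2*pi) * (cnj (a (int k)) * c1 k + a (int k) * c2 k)"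
      using G_int[OF g] selfadj[of "int k"] by (simp add: algebra_simps)
  qed
  also have "\<dots> = complex_of_real (2*pi * Lf a N x)"
    unfolding Lf_def of_real_mult of_real_sum sum_distrib_left
  proof (intro arg_cong2[where f="(*)"] refl sum.cong)
    fix k
    show "cnj (a (int k)) * c1 k + a (int k) * c2 k = complex_of_real (x (2 * k) * Re (a (int k)) - x (2 * k + 1) * Im (a (int k)))"
      unfolding c1_def c2_def by (simp add: complex_eq_iff field_simps)
  qed
  finally show ?thesis .
qed

lemma cis_inj:
  assumes "cis a = cis b" "\<bar>a - b\<bar> < 2*pi"
  shows "a = b"
proof -
  have "sin a = sin b \<and> cos a = cos b" using assms(1) by (simp add: complex_eq_iff)
  then obtain n :: int where n: "a = b + 2*pi*n" using sin_cos_eq_iff by blast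
  then have "\<bar>2*pi*real_of_int n\<bar> < 2*pi" using assms(2) by simp
  then have "\<bar>real_of_int n\<bar> < 1" using pi_gt_zero by (simp add: abs_mult)
  then have "n = 0" by linarith
  then show ?thesis using n by simp
qed

definition tpoly :: "nat \<Rightarrow> (nat \<Rightarrow> real) \<Rightarrow> complex poly" where
  "tpoly N x = (\<Sum>k\<le>N. monom ((complex_of_real (x (2*k)) - \<i> * complex_of_real (x (2*k+1))) / 2) (N+k)
                     + monom ((complex_of_real (x (2*k)) + \<i> * complex_of_real (x (2*k+1))) / 2) (N-k))"

lemma tpoly_degree: "degree (tpoly N x) \<le> 2*N"
  unfolding tpoly_def
  by (intro degree_sum_le degree_add_le order.trans[OF degree_monom_le]) auto

lemma tpoly_eval: "poly (tpoly N x) (cis \<theta>) = complex_of_real (tp N x \<theta>) * cis \<theta> ^ N"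
proof -
  have "poly (tpoly N x) (cis \<theta>) = (\<Sum>k\<le>N. ((complex_of_real (x (2*k)) - \<i> * complex_of_real (x (2*k+1))) / 2) * cis \<theta> ^ (N+k)
              + ((complex_of_real (x (2*k)) + \<i> * complex_of_real (x (2*k+1))) / 2) * cis \<theta> ^ (N-k))"
    unfolding tpoly_def poly_sum poly_add poly_monom by simp
  also have "\<dots> = (\<Sum>k\<le>N. complex_of_real (x (2*k) * cos (real k * \<theta>) + x (2*k+1) * sin (real k * \<theta>)) * cis \<theta> ^ N)"
  proof (intro sum.cong refl)
    fix k assume "k \<in> {..N}"
    then have kN: "k \<le> N" by simp
    have p1: "cis \<theta> ^ (N+k) = cis \<theta> ^ N * cis (real k * \<theta>)" by (simp add: power_add Complex.DeMoivre)
    have "cis \<theta> ^ (N-k) * cis (real k * \<theta>) = cis \<theta> ^ N"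
      using kN by (metis Complex.DeMoivre le_add_diff_inverse2 power_add)
    then have p2: "cis \<theta> ^ (N-k) = cis \<theta> ^ N * cis (- (real k * \<theta>))"
      by (metis cis_inverse cis_neq_zero nonzero_eq_divide_eq divide_inverse)
    show "((complex_of_real (x (2*k)) - \<i> * complex_of_real (x (2*k+1))) / 2) * cis \<theta> ^ (N+k)
              + ((complex_of_real (x (2*k)) + \<i> * complex_of_real (x (2*k+1))) / 2) * cis \<theta> ^ (N-k) =
        complex_of_real (x (2*k) * cos (real k * \<theta>) + x (2*k+1) * sin (real k * \<theta>)) * cis \<theta> ^ N"
      unfolding p1 p2 by (simp add: complex_eq_iff cis.sel field_simps)
  qed
  also have "\<dots> = complex_of_real (tp N x \<theta>) * cis \<theta> ^ N"
    unfolding tp_def of_real_sum sum_distrib_right by simp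
  finally show ?thesis .
qed

lemma tp_zeros:
  assumes "\<exists>t. tp N x t \<noteq> 0"
  shows "finite {\<theta>\<in>{\<alpha><..<\<alpha>+2*pi}. tp N x \<theta> = 0}" "card {\<theta>\<in>{\<alpha><..<\<alpha>+2*pi}. tp N x \<theta> = 0} \<le> 2*N"
proof -
  let ?Z = "{\<theta>\<in>{\<alpha><..<\<alpha>+2*pi}. tp N x \<theta> = 0}"
  have Q: "tpoly N x \<noteq> 0"
  proof
    assume "tpoly N x = 0"
    then have "tp N x t = 0" for t using tpoly_eval[of N x t] by simp
    then show False using assms by blast
  qed
  have sub: "cis ` ?Z \<subseteq> {z. poly (tpoly N x) z = 0}"
    using tpoly_eval by auto
  have inj: "inj_on cis ?Z"
    by (rule inj_onI, rule cis_inj) auto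
  have fin: "finite {z. poly (tpoly N x) z = 0}" using poly_roots_finite[OF Q] .
  show "finite ?Z" using finite_imageD[OF finite_subset[OF sub fin] inj] .
  have "card ?Z = card (cis ` ?Z)" using card_image[OF inj] by simp
  also have "\<dots> \<le> card {z. poly (tpoly N x) z = 0}" using card_mono[OF fin sub] .
  also have "\<dots> \<le> degree (tpoly N x)" using card_poly_roots_bound[OF Q] .
  also have "\<dots> \<le> 2*N" by (rule tpoly_degree)
  finally show "card ?Z \<le> 2*N" .
qed

lemma tp_periodic: "tp N x (\<theta> + 2*pi*real_of_int m) = tp N x \<theta>"
proof -
  have c: "cos (real k * (\<theta> + 2*pi*real_of_int m)) = cos (real k * \<theta>)" for k
  proof -
    have "real k * (\<theta> + 2*pi*real_of_int m) = real k * \<theta> + 2*pi*real_of_int (int k * m)" by (simp add: algebra_simps)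
    then show ?thesis by (simp add: cos_add cos_integer_2pi sin_integer_2pi)
  qed
  have s: "sin (real k * (\<theta> + 2*pi*real_of_int m)) = sin (real k * \<theta>)" for k
  proof -
    have "real k * (\<theta> + 2*pi*real_of_int m) = real k * \<theta> + 2*pi*real_of_int (int k * m)" by (simp add: algebra_simps)
    then show ?thesis by (simp add: sin_add cos_integer_2pi sin_integer_2pi)
  qed
  show ?thesis unfolding tp_def c s ..
qed

lemma finite_null_circ: "finite F \<Longrightarrow> F \<subseteq> {0..2*pi} \<Longrightarrow> F \<in> null_sets circ"
  unfolding circ_def
  by (subst null_sets_restrict_space) (auto intro: null_sets_completionI finite_imp_null_set_lborel)

lemma tp_AE_nonzero:
  assumes "\<exists>t. tp N x t \<noteq> 0"
  shows "AE \<theta> in circ. tp N x \<theta> \<noteq> 0"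
proof -
  let ?F = "{\<theta>\<in>{0..2*pi}. tp N x \<theta> = 0}"
  have "?F \<subseteq> {\<theta>\<in>{-1<..<-1+2*pi}. tp N x \<theta> = 0} \<union> {\<theta>\<in>{(2*pi-2)<..<(2*pi-2)+2*pi}. tp N x \<theta> = 0}"
    using pi_gt3 by auto
  then have "finite ?F" using tp_zeros(1)[OF assms] by (meson finite_UnI finite_subset)
  then have "?F \<in> null_sets circ" by (intro finite_null_circ) auto
  then show ?thesis by (rule AE_I') auto
qed

lemma tp_meas[measurable]: "tp N x \<in> borel_measurable circ"
  by (intro cont_meas_circ continuous_intros)

lemma pointwise_deriv:
  fixes A B :: real
  assumes "A \<noteq> 0"
  shows "(\<lambda>n. (\<bar>A + (1/(real n+1)) * B\<bar> - \<bar>A\<bar>) / (1/(real n+1))) \<longlonglongrightarrow> sgn A * B"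
proof -
  have z: "(\<lambda>n. 1/(real n+1)) \<longlonglongrightarrow> 0"
    using LIMSEQ_inverse_real_of_nat by (simp add: inverse_eq_divide add.commute)
  have "(\<lambda>n. (1/(real n+1)) * \<bar>B\<bar>) \<longlonglongrightarrow> 0 * \<bar>B\<bar>"
    by (intro tendsto_intros z)
  then have "eventually (\<lambda>n. (1/(real n+1)) * \<bar>B\<bar> < \<bar>A\<bar>) sequentially"
    using assms by (intro order_tendstoD(2)) auto
  then have "eventually (\<lambda>n. (\<bar>A + (1/(real n+1)) * B\<bar> - \<bar>A\<bar>) / (1/(real n+1)) = sgn A * B) sequentially"
  proof (rule eventually_mono)
    fix n assume h: "(1/(real n+1)) * \<bar>B\<bar> < \<bar>A\<bar>"
    let ?t = "1/(real n+1)"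
    have tpos: "?t > 0" by simp
    have "\<bar>?t * B\<bar> < \<bar>A\<bar>" using h tpos by (simp add: abs_mult)
    then have "\<bar>A + ?t * B\<bar> = sgn A * (A + ?t * B)"
      by (cases "A > 0") (auto simp: sgn_if abs_if split: if_splits)
    then have "\<bar>A + ?t * B\<bar> - \<bar>A\<bar> = ?t * (sgn A * B)"
      using abs_sgn[of A] by (simp add: algebra_simps)
    then show "(\<bar>A + ?t * B\<bar> - \<bar>A\<bar>) / ?t = sgn A * B" using tpos by simp
  qed
  then show ?thesis by (rule tendsto_eventually)
qed

lemma variational:
  assumes p: "p \<in> Xs N" and nrmp: "nrm N p = 1"
    and max: "\<forall>x\<in>Xs N. Lf a N x \<le> Lf a N p * nrm N x" and M: "Lf a N p \<ge> 0"
    and nz: "\<exists>t. tp N p t \<noteq> 0" and q: "q \<in> Xs N"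
  shows "Lf a N q \<le> Lf a N p * ((LINT \<theta>|circ. sgn (tp N p \<theta>) * tp N q \<theta>) / (2*pi))"
proof -
  let ?M = "Lf a N p"
  define t where "t n = 1 / (real n + 1)" for n :: nat
  have tpos: "t n > 0" for n unfolding t_def by simp
  define s where "s n \<theta> = (\<bar>tp N p \<theta> + t n * tp N q \<theta>\<bar> - \<bar>tp N p \<theta>\<bar>) / t n" for n \<theta>
  have s_meas: "s n \<in> borel_measurable circ" for n unfolding s_def by measurable
  have s_bound: "norm (s n \<theta>) \<le> \<bar>tp N q \<theta>\<bar>" for n \<theta>
  proof -
    have "\<bar>\<bar>tp N p \<theta> + t n * tp N q \<theta>\<bar> - \<bar>tp N p \<theta>\<bar>\<bar> \<le> t n * \<bar>tp N q \<theta>\<bar>"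
      using abs_triangle_ineq3[of "tp N p \<theta> + t n * tp N q \<theta>" "tp N p \<theta>"] tpos[of n] by (simp add: abs_mult)
    then show ?thesis unfolding s_def using tpos[of n] by (simp add: pos_divide_le_eq mult.commute)
  qed
  have ineq: "Lf a N q \<le> ?M * ((LINT \<theta>|circ. s n \<theta>) / (2*pi))" for n
  proof -
    let ?x = "\<lambda>i. p i + t n * q i"
    have "?x \<in> Xs N" by (rule Xs_lin[OF p q])
    then have le: "?M + t n * Lf a N q \<le> ?M * nrm N ?x" using max \<open>?x \<in> Xs N\<close> Lf_lin[of a N p "t n" q] by auto
    have "(LINT \<theta>|circ. s n \<theta>) = ((LINT \<theta>|circ. \<bar>tp N ?x \<theta>\<bar>) - (LINT \<theta>|circ. \<bar>tp N p \<theta>\<bar>)) / t n"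
    proof -
      have i1: "integrable circ (\<lambda>\<theta>. \<bar>tp N p \<theta> + t n * tp N q \<theta>\<bar>)" by (intro cont_int_circ continuous_intros)
      show ?thesis
        unfolding s_def tp_lin by (subst Bochner_Integration.integral_diff[symmetric]) (auto simp: i1)
    qed
    then have "nrm N ?x = nrm N p + t n * ((LINT \<theta>|circ. s n \<theta>) / (2*pi))"
      unfolding nrm_def using tpos[of n] by (simp add: field_simps)
    then have "?M + t n * Lf a N q \<le> ?M + t n * (?M * ((LINT \<theta>|circ. s n \<theta>) / (2*pi)))"
      using le nrmp by (simp add: algebra_simps)
    then have "t n * Lf a N q \<le> t n * (?M * ((LINT \<theta>|circ. s n \<theta>) / (2*pi)))" by linarith
    then show ?thesis using tpos[of n] by (rule mult_left_le_imp_le)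
  qed
  have conv: "(\<lambda>n. LINT \<theta>|circ. s n \<theta>) \<longlonglongrightarrow> (LINT \<theta>|circ. sgn (tp N p \<theta>) * tp N q \<theta>)"
  proof (rule integral_dominated_convergence[where w="\<lambda>\<theta>. \<bar>tp N q \<theta>\<bar>"])
    show "(\<lambda>\<theta>. sgn (tp N p \<theta>) * tp N q \<theta>) \<in> borel_measurable circ" by measurable
    show "s n \<in> borel_measurable circ" for n by (rule s_meas)
    show "integrable circ (\<lambda>\<theta>. \<bar>tp N q \<theta>\<bar>)" by auto
    show "AE \<theta> in circ. (\<lambda>n. s n \<theta>) \<longlonglongrightarrow> sgn (tp N p \<theta>) * tp N q \<theta>"
      using tp_AE_nonzero[OF nz]
    proof (rule eventually_mono)
      fix \<theta> assume "tp N p \<theta> \<noteq> 0"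
      then show "(\<lambda>n. s n \<theta>) \<longlonglongrightarrow> sgn (tp N p \<theta>) * tp N q \<theta>"
        unfolding s_def t_def by (rule pointwise_deriv)
    qed
    show "AE \<theta> in circ. norm (s n \<theta>) \<le> \<bar>tp N q \<theta>\<bar>" for n using s_bound by auto
  qed
  have "(\<lambda>n. ?M * ((LINT \<theta>|circ. s n \<theta>) / (2*pi))) \<longlonglongrightarrow> ?M * ((LINT \<theta>|circ. sgn (tp N p \<theta>) * tp N q \<theta>) / (2*pi))"
    using pi_gt_zero by (intro tendsto_intros conv) auto
  then show ?thesis using ineq by (intro LIMSEQ_le_const) auto
qed

definition uv :: "nat \<Rightarrow> nat \<Rightarrow> real" where
  "uv j = (\<lambda>i. if i = j then 1 else 0)"

lemma tp_uv_cos: "k \<le> N \<Longrightarrow> tp N (uv (2*k)) \<theta> = cos (real k * \<theta>)"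
proof -
  assume k: "k \<le> N"
  have "tp N (uv (2*k)) \<theta> = (\<Sum>j\<le>N. if j = k then cos (real k * \<theta>) else 0)"
    unfolding tp_def uv_def by (intro sum.cong refl) auto
  then show ?thesis using k by simp
qed

lemma tp_uv_sin: "k \<le> N \<Longrightarrow> tp N (uv (2*k+1)) \<theta> = sin (real k * \<theta>)"
proof -
  assume k: "k \<le> N"
  have "tp N (uv (2*k+1)) \<theta> = (\<Sum>j\<le>N. if j = k then sin (real k * \<theta>) else 0)"
    unfolding tp_def uv_def by (intro sum.cong refl) auto
  then show ?thesis using k by simp
qed

lemma Lf_uv_cos: "k \<le> N \<Longrightarrow> Lf a N (uv (2*k)) = Re (a (int k))"
proof -
  assume k: "k \<le> N"
  have "Lf a N (uv (2*k)) = (\<Sum>j\<le>N. if j = k then Re (a (int k)) else 0)"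
    unfolding Lf_def uv_def by (intro sum.cong refl) auto
  then show ?thesis using k by simp
qed

lemma Lf_uv_sin: "k \<le> N \<Longrightarrow> Lf a N (uv (2*k+1)) = - Im (a (int k))"
proof -
  assume k: "k \<le> N"
  have "Lf a N (uv (2*k+1)) = (\<Sum>j\<le>N. if j = k then - Im (a (int k)) else 0)"
    unfolding Lf_def uv_def by (intro sum.cong refl) auto
  then show ?thesis using k by simp
qed

lemma uv_cos_Xs: "k \<le> N \<Longrightarrow> uv (2*k) \<in> Xs N"
  unfolding uv_def Xs_def by auto

lemma uv_sin_Xs: "k \<le> N \<Longrightarrow> k \<noteq> 0 \<Longrightarrow> uv (2*k+1) \<in> Xs N"
  unfolding uv_def Xs_def by auto

lemma Im_a0:
  assumes selfadj: "\<And>n. \<bar>n\<bar> \<le> int N \<Longrightarrow> a (- n) = cnj (a n)"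
  shows "Im (a 0) = 0"
  using selfadj[of 0] by (simp add: complex_eq_iff)

lemma Lf_zero_imp:
  assumes selfadj: "\<And>n. \<bar>n\<bar> \<le> int N \<Longrightarrow> a (- n) = cnj (a n)"
    and Z: "\<forall>x\<in>Xs N. Lf a N x = 0" and n: "\<bar>n\<bar> \<le> int N"
  shows "a n = 0"
proof -
  have ak: "a (int k) = 0" if k: "k \<le> N" for k
  proof -
    have "Re (a (int k)) = 0" using Z uv_cos_Xs[OF k] Lf_uv_cos[OF k] by metis
    moreover have "Im (a (int k)) = 0"
    proof (cases "k = 0")
      case True then show ?thesis using Im_a0[of N a, OF selfadj] by simp
    next
      case False then show ?thesis using Z uv_sin_Xs[OF k False] Lf_uv_sin[OF k] by fastforce
    qed
    ultimately show ?thesis by (simp add: complex_eq_iff)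
  qed
  show ?thesis
  proof (cases "n \<ge> 0")
    case True
    then show ?thesis using ak[of "nat n"] n by simp
  next
    case False
    then have "a (- (- n)) = cnj (a (- n))" using selfadj[of "-n"] n by simp
    then show ?thesis using ak[of "nat (-n)"] n False by simp
  qed
qed


lemma intsgn:
  assumes "continuous_on UNIV h" "\<And>\<theta>. \<bar>h \<theta>\<bar> \<le> C"
  shows "integrable circ (\<lambda>\<theta>. sgn (tp N p \<theta>) * h \<theta>)"
proof -
  interpret finite_measure circ by simp
  show ?thesis
  proof (rule integrable_const_bound[where B=C])
    show "AE \<theta> in circ. norm (sgn (tp N p \<theta>) * h \<theta>) \<le> C"
    proof (rule AE_I2)
      fix \<theta>
      have "0 \<le> C" using assms(2)[of \<theta>] by linarith
      then show "norm (sgn (tp N p \<theta>) * h \<theta>) \<le> C" using assms(2)[of \<theta>] by (auto simp: abs_mult sgn_if)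
    qed
    show "(\<lambda>\<theta>. sgn (tp N p \<theta>) * h \<theta>) \<in> borel_measurable circ"
      using cont_meas_circ[OF assms(1)] by measurable
  qed
qed

lemma Re_eq_norm:
  fixes w :: complex
  assumes "cmod w \<le> M" "Re w = M"
  shows "w = complex_of_real M"
proof -
  have "(cmod w)^2 = (Re w)^2 + (Im w)^2" by (simp add: cmod_power2)
  moreover have "(cmod w)^2 \<le> M^2" using assms by (intro power_mono) auto
  ultimately have "(Im w)^2 \<le> 0" using assms(2) by simp
  then have "Im w = 0" by (simp add: power2_less_eq_zero_iff)
  then show ?thesis using assms(2) by (simp add: complex_eq_iff)
qed

lemma shift_period:
  "\<exists>m::int. \<alpha> < \<theta> + 2*pi*real_of_int m \<and> \<theta> + 2*pi*real_of_int m \<le> \<alpha> + 2*pi"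
proof -
  define m where "m = \<lfloor>(\<alpha> - \<theta>) / (2*pi)\<rfloor> + 1"
  have "real_of_int m - 1 \<le> (\<alpha> - \<theta>) / (2*pi)" "(\<alpha> - \<theta>) / (2*pi) < real_of_int m"
    unfolding m_def by linarith+
  then have "2*pi*(real_of_int m - 1) \<le> \<alpha> - \<theta>" "\<alpha> - \<theta> < 2*pi*real_of_int m"
    using pi_gt_zero by (simp_all add: field_simps)
  then show ?thesis by (intro exI[of _ m]) (simp add: algebra_simps)
qed

context
  fixes a :: "int \<Rightarrow> complex" and N :: nat and p :: "nat \<Rightarrow> real"
  assumes selfadj: "\<And>n. \<bar>n\<bar> \<le> int N \<Longrightarrow> a (- n) = cnj (a n)"
    and pX: "p \<in> Xs N" and nrmp: "nrm N p = 1"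
    and pmax: "\<forall>x\<in>Xs N. Lf a N x \<le> Lf a N p * nrm N x" and Mpos: "Lf a N p > 0"
begin

lemma nz: "\<exists>t. tp N p t \<noteq> 0"
proof (rule ccontr)
  assume "\<not> (\<exists>t. tp N p t \<noteq> 0)"
  then have "nrm N p = 0" unfolding nrm_def by simp
  then show False using nrmp by simp
qed

lemma var_eq: "q \<in> Xs N \<Longrightarrow> Lf a N q = Lf a N p * ((LINT \<theta>|circ. sgn (tp N p \<theta>) * tp N q \<theta>) / (2*pi))"
proof -
  assume q: "q \<in> Xs N"
  have le1: "Lf a N q \<le> Lf a N p * ((LINT \<theta>|circ. sgn (tp N p \<theta>) * tp N q \<theta>) / (2*pi))"
    using variational[OF pX nrmp pmax _ nz q] Mpos by simp
  have q': "(\<lambda>i. (-1) * q i) \<in> Xs N" by (rule Xs_scale[OF q])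
  have le2: "Lf a N (\<lambda>i. (-1) * q i) \<le> Lf a N p * ((LINT \<theta>|circ. sgn (tp N p \<theta>) * tp N (\<lambda>i. (-1) * q i) \<theta>) / (2*pi))"
    using variational[OF pX nrmp pmax _ nz q'] Mpos by simp
  then have "- Lf a N q \<le> - (Lf a N p * ((LINT \<theta>|circ. sgn (tp N p \<theta>) * tp N q \<theta>) / (2*pi)))"
    unfolding Lf_scale tp_scale by simp
  then show ?thesis using le1 by linarith
qed

definition FF :: "real \<Rightarrow> real" where "FF \<theta> = Lf a N p * sgn (tp N p \<theta>)"

definition ff :: "real \<Rightarrow> complex" where "ff \<theta> = complex_of_real (FF \<theta>)"

lemma FF_meas[measurable]: "FF \<in> borel_measurable circ"
  unfolding FF_def by measurable

lemma FF_int: "continuous_on UNIV h \<Longrightarrow> (\<And>\<theta>. \<bar>h \<theta>\<bar> \<le> C) \<Longrightarrow> integrable circ (\<lambda>\<theta>. FF \<theta> * h \<theta>)"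
  unfolding FF_def mult.assoc by (intro integrable_mult_right intsgn) auto

lemma FF_cos: "k \<le> N \<Longrightarrow> (LINT \<theta>|circ. FF \<theta> * cos (real k * \<theta>)) = 2*pi * Re (a (int k))"
proof -
  assume k: "k \<le> N"
  have "Re (a (int k)) = Lf a N p * ((LINT \<theta>|circ. sgn (tp N p \<theta>) * cos (real k * \<theta>)) / (2*pi))"
    using var_eq[OF uv_cos_Xs[OF k]] unfolding Lf_uv_cos[OF k] tp_uv_cos[OF k] .
  moreover have "(LINT \<theta>|circ. FF \<theta> * cos (real k * \<theta>)) = Lf a N p * (LINT \<theta>|circ. sgn (tp N p \<theta>) * cos (real k * \<theta>))"
    unfolding FF_def mult.assoc by simp
  ultimately show ?thesis using pi_gt_zero by simp
qed

lemma FF_sin: "k \<le> N \<Longrightarrow> (LINT \<theta>|circ. FF \<theta> * sin (real k * \<theta>)) = - 2*pi * Im (a (int k))"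
proof -
  assume k: "k \<le> N"
  show ?thesis
  proof (cases "k = 0")
    case True then show ?thesis using Im_a0[of N a, OF selfadj] by simp
  next
    case False
    have "- Im (a (int k)) = Lf a N p * ((LINT \<theta>|circ. sgn (tp N p \<theta>) * sin (real k * \<theta>)) / (2*pi))"
      using var_eq[OF uv_sin_Xs[OF k False]] unfolding Lf_uv_sin[OF k] tp_uv_sin[OF k] .
    moreover have "(LINT \<theta>|circ. FF \<theta> * sin (real k * \<theta>)) = Lf a N p * (LINT \<theta>|circ. sgn (tp N p \<theta>) * sin (real k * \<theta>))"
      unfolding FF_def mult.assoc by simp
    ultimately show ?thesis using pi_gt_zero by (simp add: field_simps)
  qed
qed

lemma ff_exp: "ff \<theta> * exp (- \<i> * of_int n * complex_of_real \<theta>) =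
   complex_of_real (FF \<theta> * cos (real_of_int n * \<theta>)) - \<i> * complex_of_real (FF \<theta> * sin (real_of_int n * \<theta>))"
  unfolding ff_def by (simp add: complex_eq_iff Re_exp Im_exp)

lemma ff_coeff: "\<bar>n\<bar> \<le> int N \<Longrightarrow> fourier_coeff ff n = a n"
proof -
  assume n: "\<bar>n\<bar> \<le> int N"
  have ic: "integrable circ (\<lambda>\<theta>. FF \<theta> * cos (real_of_int n * \<theta>))"
    by (rule FF_int[where C=1]) (auto intro!: continuous_intros)
  have isn: "integrable circ (\<lambda>\<theta>. FF \<theta> * sin (real_of_int n * \<theta>))"
    by (rule FF_int[where C=1]) (auto intro!: continuous_intros)
  have I: "(LINT \<theta>|circ. ff \<theta> * exp (- \<i> * of_int n * complex_of_real \<theta>)) =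
      complex_of_real (LINT \<theta>|circ. FF \<theta> * cos (real_of_int n * \<theta>)) - \<i> * complex_of_real (LINT \<theta>|circ. FF \<theta> * sin (real_of_int n * \<theta>))"
  proof -
    have i1: "integrable circ (\<lambda>\<theta>. complex_of_real (FF \<theta> * cos (real_of_int n * \<theta>)))"
      by (rule integrable_of_real[OF ic])
    have i2: "integrable circ (\<lambda>\<theta>. \<i> * complex_of_real (FF \<theta> * sin (real_of_int n * \<theta>)))"
      by (rule integrable_mult_right[OF integrable_of_real[OF isn]])
    show ?thesis unfolding ff_exp Bochner_Integration.integral_diff[OF i1 i2]
      by (simp only: integral_mult_right_zero integral_complex_of_real)
  qed
  show ?thesis
  proof (cases "n \<ge> 0")
    case True
    define k where "k = nat n"
    have nk: "n = int k" "k \<le> N" using True n unfolding k_def by auto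
    have "real_of_int n = real k" using nk by simp
    then show ?thesis unfolding fourier_coeff_def I using FF_cos[OF nk(2)] FF_sin[OF nk(2)] nk(1) pi_gt_zero
      by (simp add: complex_eq_iff field_simps)
  next
    case False
    define k where "k = nat (- n)"
    have nk: "n = - int k" "k \<le> N" using False n unfolding k_def by auto
    have rn: "real_of_int n * \<theta> = - (real k * \<theta>)" for \<theta> using nk by simp
    have an: "a n = cnj (a (int k))" using selfadj[of "int k"] nk by simp
    show ?thesis unfolding fourier_coeff_def I rn cos_minus sin_minus using FF_cos[OF nk(2)] FF_sin[OF nk(2)] pi_gt_zero
      by (simp add: complex_eq_iff field_simps an)
  qed
qed

lemma ff_meas[measurable]: "ff \<in> borel_measurable circ"
  unfolding ff_def by measurable

lemma ff_linf: "linf_norm ff = ereal (Lf a N p)"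
proof -
  have "esssup circ (\<lambda>\<theta>. ereal (cmod (ff \<theta>))) = esssup circ (\<lambda>\<theta>. ereal (Lf a N p))"
  proof (rule esssup_AE_cong)
    show "AE \<theta> in circ. ereal (cmod (ff \<theta>)) = ereal (Lf a N p)"
      using tp_AE_nonzero[OF nz]
    proof (rule eventually_mono)
      fix \<theta> assume "tp N p \<theta> \<noteq> 0"
      then show "ereal (cmod (ff \<theta>)) = ereal (Lf a N p)"
        unfolding ff_def FF_def norm_of_real using Mpos by (simp add: abs_mult sgn_if)
    qed
  qed auto
  then show ?thesis unfolding linf_norm_def using esssup_const[OF circ_not_null] by simp
qed

lemma ff_G: "ff \<in> G_set a N"
  unfolding G_set_def in_Linf_def using ff_linf ff_coeff by auto

lemma ff_min: "g \<in> G_set a N \<Longrightarrow> Lf a N p \<le> real_of_ereal (linf_norm g)"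
proof -
  assume g: "g \<in> G_set a N"
  have gL: "in_Linf g" using g unfolding G_set_def by auto
  let ?B = "real_of_ereal (linf_norm g)"
  have ig: "integrable circ (\<lambda>\<theta>. g \<theta> * complex_of_real (tp N p \<theta>))"
    by (rule Linf_int_mult[OF gL, where C="\<Sum>i<2*N+2. \<bar>p i\<bar>"]) (use tp_bound[of N p] in \<open>auto intro!: continuous_intros\<close>)
  have "2*pi * Lf a N p = cmod (LINT \<theta>|circ. g \<theta> * complex_of_real (tp N p \<theta>))"
    using G_pair[OF g selfadj, of p] Mpos pi_gt_zero by (simp add: norm_mult)
  also have "\<dots> \<le> (LINT \<theta>|circ. cmod (g \<theta> * complex_of_real (tp N p \<theta>)))"
    by (rule integral_norm_bound)
  also have "\<dots> \<le> (LINT \<theta>|circ. ?B * \<bar>tp N p \<theta>\<bar>)"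
  proof (rule integral_mono_AE)
    show "integrable circ (\<lambda>\<theta>. cmod (g \<theta> * complex_of_real (tp N p \<theta>)))" using ig by auto
    show "integrable circ (\<lambda>\<theta>. ?B * \<bar>tp N p \<theta>\<bar>)" by auto
    show "AE \<theta> in circ. cmod (g \<theta> * complex_of_real (tp N p \<theta>)) \<le> ?B * \<bar>tp N p \<theta>\<bar>"
      using Linf_bound[OF gL] by (rule eventually_mono) (simp add: norm_mult mult_right_mono)
  qed
  also have "\<dots> = ?B * (2*pi)" using nrmp unfolding nrm_def by simp
  finally show ?thesis using pi_gt_zero by (simp add: mult.commute)
qed

lemma ff_unique: "g \<in> G_set a N \<Longrightarrow> real_of_ereal (linf_norm g) \<le> Lf a N p \<Longrightarrow> AE \<theta> in circ. g \<theta> = ff \<theta>"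
proof -
  assume g: "g \<in> G_set a N" and gle: "real_of_ereal (linf_norm g) \<le> Lf a N p"
  have gL: "in_Linf g" using g unfolding G_set_def by auto
  let ?M = "Lf a N p"
  have ig: "integrable circ (\<lambda>\<theta>. g \<theta> * complex_of_real (tp N p \<theta>))"
    by (rule Linf_int_mult[OF gL, where C="\<Sum>i<2*N+2. \<bar>p i\<bar>"]) (use tp_bound[of N p] in \<open>auto intro!: continuous_intros\<close>)
  have gb: "AE \<theta> in circ. cmod (g \<theta>) \<le> ?M"
    using Linf_bound[OF gL] by (rule eventually_mono) (use gle in auto)
  define h where "h \<theta> = ?M * \<bar>tp N p \<theta>\<bar> - Re (g \<theta> * complex_of_real (tp N p \<theta>))" for \<theta>
  have ih: "integrable circ h" unfolding h_def
    by (rule Bochner_Integration.integrable_diff[OF _ integrable_Re[OF ig]]) auto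
  have hnn: "AE \<theta> in circ. 0 \<le> h \<theta>"
    using gb
  proof (rule eventually_mono)
    fix \<theta> assume "cmod (g \<theta>) \<le> ?M"
    moreover have "Re (g \<theta> * complex_of_real (tp N p \<theta>)) \<le> cmod (g \<theta> * complex_of_real (tp N p \<theta>))"
      by (rule complex_Re_le_cmod)
    ultimately show "0 \<le> h \<theta>" unfolding h_def by (simp add: norm_mult) (meson abs_ge_zero mult_right_mono order_trans)
  qed
  have "(LINT \<theta>|circ. h \<theta>) = ?M * (2*pi) - Re (LINT \<theta>|circ. g \<theta> * complex_of_real (tp N p \<theta>))"
  proof -
    have iR: "integrable circ (\<lambda>\<theta>. Re (g \<theta> * complex_of_real (tp N p \<theta>)))" by (rule integrable_Re[OF ig])
    have iA: "integrable circ (\<lambda>\<theta>. ?M * \<bar>tp N p \<theta>\<bar>)" by (rule integrable_mult_right[OF int_abs_tp])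
    have "(LINT \<theta>|circ. h \<theta>) = (LINT \<theta>|circ. ?M * \<bar>tp N p \<theta>\<bar>) - (LINT \<theta>|circ. Re (g \<theta> * complex_of_real (tp N p \<theta>)))"
      unfolding h_def by (rule Bochner_Integration.integral_diff[OF iA iR])
    also have "(LINT \<theta>|circ. Re (g \<theta> * complex_of_real (tp N p \<theta>))) = Re (LINT \<theta>|circ. g \<theta> * complex_of_real (tp N p \<theta>))"
      by (rule integral_bounded_linear[OF bounded_linear_Re ig])
    also have "(LINT \<theta>|circ. ?M * \<bar>tp N p \<theta>\<bar>) = ?M * (2*pi)" using nrmp unfolding nrm_def by simp
    finally show ?thesis .
  qed
  also have "\<dots> = 0" using G_pair[OF g selfadj, of p] by simp
  finally have "AE \<theta> in circ. h \<theta> = 0" using integral_nonneg_eq_0_iff_AE[OF ih hnn] by simp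
  then show "AE \<theta> in circ. g \<theta> = ff \<theta>"
    using gb tp_AE_nonzero[OF nz]
  proof (eventually_elim)
    case (elim \<theta>)
    let ?s = "sgn (tp N p \<theta>)"
    have s2: "?s * ?s = 1" "\<bar>?s\<bar> = 1" using elim(3) by (auto simp: sgn_if)
    have tps: "tp N p \<theta> = ?s * \<bar>tp N p \<theta>\<bar>" by (simp add: sgn_mult_abs)
    have apos: "\<bar>tp N p \<theta>\<bar> > 0" using elim(3) by simp
    have e1: "?M * \<bar>tp N p \<theta>\<bar> = Re (g \<theta>) * tp N p \<theta>" using elim(1) unfolding h_def by simp
    have e2: "Re (g \<theta>) * tp N p \<theta> = Re (g \<theta>) * ?s * \<bar>tp N p \<theta>\<bar>" by (simp add: sgn_mult_abs mult.assoc)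
    have "?M * \<bar>tp N p \<theta>\<bar> = (Re (g \<theta>) * ?s) * \<bar>tp N p \<theta>\<bar>" using e1 e2 by simp
    then have "Re (g \<theta>) * ?s = ?M" using apos by simp
    then have re: "Re (g \<theta> * complex_of_real ?s) = ?M" by simp
    have nm: "cmod (g \<theta> * complex_of_real ?s) \<le> ?M" using elim(2) s2 by (simp add: norm_mult)
    have "g \<theta> * complex_of_real ?s = complex_of_real ?M" by (rule Re_eq_norm[OF nm re])
    then have "g \<theta> * complex_of_real ?s * complex_of_real ?s = complex_of_real (?M * ?s)" by simp
    then show ?case unfolding ff_def FF_def using s2 by (simp add: mult.assoc of_real_mult[symmetric] del: of_real_mult)
  qed
qed

lemma ff_structure:
  "(\<exists>c. \<bar>c\<bar> = Lf a N p \<and> const_ae c ff) \<or> (\<exists>n. 1 \<le> n \<and> n \<le> N \<and> alt_step (Lf a N p) n ff)"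
proof (cases "\<forall>t. tp N p t \<ge> 0")
  case True
  have "const_ae (Lf a N p) ff" unfolding const_ae_def
    using tp_AE_nonzero[OF nz]
  proof (rule eventually_mono)
    fix \<theta> assume "tp N p \<theta> \<noteq> 0"
    then have "tp N p \<theta> > 0" using True[rule_format, of \<theta>] by linarith
    then show "ff \<theta> = complex_of_real (Lf a N p)" unfolding ff_def FF_def by simp
  qed
  then show ?thesis using Mpos by auto
next
  case False
  then obtain \<alpha> where al: "tp N p \<alpha> < 0" by (auto simp: not_le)
  let ?P = "tp N p"
  let ?M = "Lf a N p"
  let ?Z = "{x\<in>{\<alpha><..<\<alpha>+2*pi}. ?P x = 0}"
  have per: "?P (\<theta> + 2*pi*real_of_int m) = ?P \<theta>" for \<theta> m by (rule tp_periodic)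
  have Pb: "?P (\<alpha> + 2*pi) = ?P \<alpha>" using per[of \<alpha> 1] by simp
  have finZ: "finite ?Z" and cardZ: "card ?Z \<le> 2*N" using tp_zeros[OF nz] by auto
  obtain r c where rc: "r \<le> card ?Z" "c 0 = \<alpha>" "c (Suc r) = \<alpha> + 2*pi" "\<forall>i\<le>r. c i < c (Suc i)"
      "\<forall>i\<le>r. \<forall>x. c i < x \<and> x < c (Suc i) \<and> ?P x \<noteq> 0 \<longrightarrow> sgn (?P x) = sgn (?P \<alpha>) * (-1)^i"
      "sgn (?P (\<alpha> + 2*pi)) = sgn (?P \<alpha>) * (-1)^r"
    using sign_structure_n[OF tp_cont, of \<alpha> "\<alpha> + 2*pi" N p "card ?Z"] al Pb finZ pi_gt_zero by auto
  have sa: "sgn (?P \<alpha>) = -1" using al by simp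
  have arcs: "sgn (?P x) = - ((-1)^i)" if "i \<le> r" "c i < x" "x < c (Suc i)" "?P x \<noteq> 0" for i x
    using rc(5) that sa by auto
  have ev: "(-1::real)^r = 1" using rc(6) Pb sa by simp
  then have evr: "even r" by (metis neg_one_odd_power one_neq_neg_one)
  have rN: "r \<le> 2*N" using rc(1) cardZ by simp
  show ?thesis
  proof (cases "r = 0")
    case True
    have "const_ae (- ?M) ff" unfolding const_ae_def
      using tp_AE_nonzero[OF nz]
    proof (rule eventually_mono)
      fix \<theta> assume nz\<theta>: "?P \<theta> \<noteq> 0"
      obtain m where m: "\<alpha> < \<theta> + 2*pi*real_of_int m" "\<theta> + 2*pi*real_of_int m \<le> \<alpha> + 2*pi"
        using shift_period by blast
      let ?x = "\<theta> + 2*pi*real_of_int m"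
      have "sgn (?P ?x) = -1"
      proof (cases "?x = \<alpha> + 2*pi")
        case True then show ?thesis using Pb sa by simp
      next
        case False
        then have "?x < c (Suc 0)" using m rc(3) \<open>r = 0\<close> by simp
        then show ?thesis using arcs[of 0 ?x] m rc(2) per nz\<theta> by simp
      qed
      then have "sgn (?P \<theta>) = -1" using per by simp
      then show "ff \<theta> = complex_of_real (- ?M)" unfolding ff_def FF_def by simp
    qed
    then show ?thesis using Mpos by (intro disjI1 exI[of _ "- ?M"]) auto
  next
    case False
    define n where "n = r div 2"
    have rn: "2*n = r" using evr unfolding n_def by simp
    have n1: "1 \<le> n" "n \<le> N" using rn False rN by auto
    define t where "t k = (if k < r then c (Suc k) else c 1 + 2*pi)" for k
    have sgnk: "sgn (?P x) = (-1)^k" if k: "k < r" and x: "t k < x" "x < t (Suc k)" and px: "?P x \<noteq> 0" for k x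
    proof (cases "Suc k < r")
      case True
      then show ?thesis using arcs[of "Suc k" x] x px unfolding t_def by simp
    next
      case False
      then have kr: "Suc k = r" using k by simp
      have odd: "(-1::real)^k = -1" using evr kr by (metis even_Suc neg_one_odd_power)
      have xl: "c r < x" "x < c 1 + 2*pi" using x kr unfolding t_def by auto
      consider "x < \<alpha> + 2*pi" | "x = \<alpha> + 2*pi" | "\<alpha> + 2*pi < x" by linarith
      then show ?thesis
      proof cases
        case 1 then show ?thesis using arcs[of r x] xl px rc(3) odd ev by simp
      next
        case 2 then show ?thesis using Pb sa odd by simp
      next
        case 3
        have "?P (x - 2*pi) = ?P x" using per[of "x - 2*pi" 1] by simp
        moreover have "c 0 < x - 2*pi" "x - 2*pi < c (Suc 0)" using 3 xl rc(2) by auto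
        ultimately show ?thesis using arcs[of 0 "x - 2*pi"] px odd by simp
      qed
    qed
    have "alt_step ?M n ff" unfolding alt_step_def
    proof (intro conjI exI[of _ t])
      show "0 < ?M" by (rule Mpos)
      show "1 \<le> n" by (rule n1)
      show "\<forall>k<2*n. t k < t (Suc k)"
      proof (intro allI impI)
        fix k assume "k < 2*n"
        then have k: "k < r" using rn by simp
        show "t k < t (Suc k)"
        proof (cases "Suc k < r")
          case True then show ?thesis using rc(4) k unfolding t_def by simp
        next
          case False
          then have kr: "Suc k = r" using k by simp
          have "c r < c (Suc r)" using rc(4) by simp
          moreover have "c 0 < c 1" using rc(4) by simp
          ultimately show ?thesis using kr k rc(2,3) unfolding t_def by simp
        qed
      qed
      show "t (2*n) = t 0 + 2*pi" using rn False unfolding t_def by simp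
      show "AE \<theta> in circ. \<forall>k<2*n. (\<exists>m::int. t k < \<theta> + 2*pi*real_of_int m \<and> \<theta> + 2*pi*real_of_int m < t (Suc k))
              \<longrightarrow> ff \<theta> = complex_of_real ((-1)^k * ?M)"
        using tp_AE_nonzero[OF nz]
      proof (rule eventually_mono, intro allI impI)
        fix \<theta> k assume nz\<theta>: "?P \<theta> \<noteq> 0" and k: "k < 2*n"
          and "\<exists>m::int. t k < \<theta> + 2*pi*real_of_int m \<and> \<theta> + 2*pi*real_of_int m < t (Suc k)"
        then obtain m :: int where m: "t k < \<theta> + 2*pi*real_of_int m" "\<theta> + 2*pi*real_of_int m < t (Suc k)" by blast
        have "sgn (?P (\<theta> + 2*pi*real_of_int m)) = (-1)^k"
          using sgnk[of k "\<theta> + 2*pi*real_of_int m"] m k rn per nz\<theta> by simp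
        then have "sgn (?P \<theta>) = (-1)^k" using per by simp
        then show "ff \<theta> = complex_of_real ((-1)^k * ?M)" unfolding ff_def FF_def by (simp add: mult.commute)
      qed
    qed
    then show ?thesis using n1 by blast
  qed
qed

end


theorem theorem4p1:
  fixes N :: nat and a :: "int \<Rightarrow> complex"
  assumes "N \<ge> 1"
    and selfadj: "\<And>n. \<bar>n\<bar> \<le> int N \<Longrightarrow> a (- n) = cnj (a n)"
  shows "\<exists>f \<in> G_set a N.
           (\<forall>g \<in> G_set a N. linf_norm f \<le> linf_norm g) \<and>
           (\<forall>g \<in> G_set a N. linf_norm g = linf_norm f \<longrightarrow> (AE \<theta> in circ. g \<theta> = f \<theta>)) \<and>
           ((\<exists>c. \<bar>c\<bar> = real_of_ereal (linf_norm f) \<and> const_ae c f) \<or>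
            (\<exists>n. 1 \<le> n \<and> n \<le> N \<and> alt_step (real_of_ereal (linf_norm f)) n f))"
proof (cases "\<forall>n. \<bar>n\<bar> \<le> int N \<longrightarrow> a n = 0")
  case True
  define f :: "real \<Rightarrow> complex" where "f = (\<lambda>_. 0)"
  have l0: "linf_norm f = 0"
    unfolding linf_norm_def f_def using esssup_const[OF circ_not_null, of "ereal 0"] by (simp add: zero_ereal_def)
  have fG: "f \<in> G_set a N"
    unfolding G_set_def in_Linf_def using l0 True by (auto simp: f_def fourier_coeff_def)
  have uniq: "AE \<theta> in circ. g \<theta> = f \<theta>" if g: "g \<in> G_set a N" "linf_norm g = linf_norm f" for g
  proof -
    have "in_Linf g" using g unfolding G_set_def by auto
    from Linf_bound[OF this] show ?thesis
      by (rule eventually_mono) (use g l0 in \<open>auto simp: f_def\<close>)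
  qed
  have "const_ae 0 f" unfolding const_ae_def f_def by simp
  then show ?thesis using fG uniq l0 linf_nonneg by (intro bexI[of _ f]) auto
next
  case False
  obtain p where p: "p \<in> Xs N" "nrm N p \<le> 1" and pmax: "\<forall>x\<in>Xs N. Lf a N x \<le> Lf a N p * nrm N x"
    using maximizer[of N a] by blast
  let ?M = "Lf a N p"
  have Mpos: "?M > 0"
  proof (rule ccontr)
    assume "\<not> ?M > 0"
    then have M0: "?M \<le> 0" by simp
    have "\<forall>x\<in>Xs N. Lf a N x = 0"
    proof
      fix x assume x: "x \<in> Xs N"
      have "Lf a N x \<le> ?M * nrm N x" using pmax x by blast
      also have "\<dots> \<le> 0" using M0 nrm_nonneg[of N x] by (simp add: mult_nonpos_nonneg)
      finally have le: "Lf a N x \<le> 0" .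
      have "Lf a N (\<lambda>i. (-1) * x i) \<le> ?M * nrm N (\<lambda>i. (-1) * x i)" using pmax Xs_scale[OF x] by blast
      also have "\<dots> \<le> 0" using M0 nrm_nonneg[of N "\<lambda>i. (-1) * x i"] by (simp add: mult_nonpos_nonneg)
      finally have "- Lf a N x \<le> 0" unfolding Lf_scale by simp
      then show "Lf a N x = 0" using le by simp
    qed
    then show False using False Lf_zero_imp[of N a, OF selfadj] by blast
  qed
  have "?M \<le> ?M * nrm N p" using pmax p(1) by blast
  then have "1 \<le> nrm N p" using Mpos by simp
  then have nrmp: "nrm N p = 1" using p(2) by simp
  note L = ff_G[where a=a and N=N and p=p, OF selfadj p(1) nrmp pmax Mpos]
    ff_linf[where a=a and N=N and p=p, OF selfadj p(1) nrmp pmax Mpos]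
    ff_min[where a=a and N=N and p=p, OF selfadj p(1) nrmp pmax Mpos]
    ff_unique[where a=a and N=N and p=p, OF selfadj p(1) nrmp pmax Mpos]
    ff_structure[where a=a and N=N and p=p, OF selfadj p(1) nrmp pmax Mpos]
  let ?f = "ff a N p"
  have min: "linf_norm ?f \<le> linf_norm g" if g: "g \<in> G_set a N" for g
  proof -
    have "in_Linf g" using g unfolding G_set_def by auto
    then have fin: "linf_norm g < \<infinity>" unfolding in_Linf_def by auto
    have "linf_norm g = ereal (real_of_ereal (linf_norm g))"
      using fin linf_nonneg[of g] by (cases "linf_norm g") auto
    have Lg: "Lf a N p \<le> real_of_ereal (linf_norm g)" by (rule L(3)) (auto simp: g)
    then show ?thesis using L(2) \<open>linf_norm g = _\<close> by (metis ereal_less_eq(3))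
  qed
  have uniq: "AE \<theta> in circ. g \<theta> = ?f \<theta>" if g: "g \<in> G_set a N" "linf_norm g = linf_norm ?f" for g
  proof -
    have "real_of_ereal (linf_norm g) \<le> Lf a N p" using g(2) L(2) by simp
    then show ?thesis using L(4)[of g] g by auto
  qed
  show ?thesis using L(1) min uniq L(5) L(2) by (intro bexI[of _ ?f]) auto
qed

end
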